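(* Let $g:[0,1]^2\to\mathbb{R}$ be symmetric (i.e. $g((x,y))=g((y,x))$ for all $(x,y)\in[0,1]^2$) and strictly increasing in both $x$ and $y$ (i.e. $g((x,y))>g((x',y))$ whenever $x>x'$ and $g((x,y))>g((x,y'))$ whenever $y>y'$). Consider the greedy algorithm that processes the points of a finite set $S\subset[0,1]^2$ containing the origin in any order in which $p$ is processed before $q$ whenever $g(p)>g(q)$. Then the worst-case approximation ratio of this algorithm is at most $3/4$; that is, $$\inf_{S}\frac{\mathrm{area}(R_{\mathrm{greedy}}(S))}{\mathrm{OPT}(S)}\le \frac34,$$ where the infimum is over all finite $S\subset[0,1]^2$ with $(0,0)\in S$, $R_{\mathrm{greedy}}(S)$ is the packing output by the algorithm, and $\mathrm{OPT}(S)$ is the maximum area of a lower-left anchored rectangle packing of $S$.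
   Context: $U=[0,1]^2$. For a point $p$, $x(p),y(p)$ are its coordinates. A rectangle is lower-left anchored at $p$ if it is an axis-parallel rectangle with lower-left corner $p$ (a point or segment counts as a degenerate rectangle of area $0$). A lower-left anchored rectangle packing (LLARP) of $S$ is a set of axis-parallel rectangles contained in $U$, pairwise interior-disjoint, with one rectangle lower-left anchored at each point of $S$, none containing a point of $S$ in its interior; its area is the area of the union of its rectangles. The greedy algorithm for a given processing order: start with $R=\emptyset$; for each point $p$ in the order, add to $R$ a maximum-area rectangle contained in $U$, lower-left anchored at $p$, interior-disjoint from the rectangles already in $R$ and containing no point of $S$ in its interior; return $R$. *)

theory Defs
  imports "HOL-Analysis.Analysis"
begin

text \<open>Points are pairs of reals. An axis-parallel rectangle is represented by its
lower-left corner and its upper-right corner (degenerate ones allowed).\<close>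

type_synonym point = "real \<times> real"
type_synonym rect = "point \<times> point"

definition unit_sq :: "point set" where
  "unit_sq = {0..1} \<times> {0..1}"

definition rect_set :: "rect \<Rightarrow> point set" where
  "rect_set r = {fst (fst r) .. fst (snd r)} \<times> {snd (fst r) .. snd (snd r)}"

definition rect_int :: "rect \<Rightarrow> point set" where
  "rect_int r = {fst (fst r) <..< fst (snd r)} \<times> {snd (fst r) <..< snd (snd r)}"

definition rect_area :: "rect \<Rightarrow> real" where
  "rect_area r = (fst (snd r) - fst (fst r)) * (snd (snd r) - snd (fst r))"

definition anchored_ok :: "point set \<Rightarrow> point \<Rightarrow> rect \<Rightarrow> bool" where
  "anchored_ok S p r \<longleftrightarrow> fst r = p \<and> fst p \<le> fst (snd r) \<and> snd p \<le> snd (snd r)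
     \<and> rect_set r \<subseteq> unit_sq \<and> (\<forall>q\<in>S. q \<notin> rect_int r)"

definition is_llarp :: "point set \<Rightarrow> rect set \<Rightarrow> bool" where
  "is_llarp S R \<longleftrightarrow> (\<exists>f. R = f ` S \<and> (\<forall>p\<in>S. anchored_ok S p (f p))
     \<and> (\<forall>p\<in>S. \<forall>q\<in>S. p \<noteq> q \<longrightarrow> rect_int (f p) \<inter> rect_int (f q) = {}))"

definition packing_area :: "rect set \<Rightarrow> real" where
  "packing_area R = measure lborel (\<Union> (rect_set ` R))"

definition OPT :: "point set \<Rightarrow> real" where
  "OPT S = Sup {packing_area R | R. is_llarp S R}"

definition greedy_cand :: "point set \<Rightarrow> rect set \<Rightarrow> point \<Rightarrow> rect \<Rightarrow> bool" where
  "greedy_cand S prev p r \<longleftrightarrow> anchored_ok S p r \<and> (\<forall>r'\<in>prev. rect_int r \<inter> rect_int r' = {})"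

text \<open>The output is set rs.\<close>
definition greedy_run :: "(point \<Rightarrow> real) \<Rightarrow> point set \<Rightarrow> point list \<Rightarrow> rect list \<Rightarrow> bool" where
  "greedy_run g S ps rs \<longleftrightarrow> distinct ps \<and> set ps = S \<and> length rs = length ps
     \<and> (\<forall>i<length ps. \<forall>j<length ps. g (ps ! i) > g (ps ! j) \<longrightarrow> i < j)
     \<and> (\<forall>i<length ps. greedy_cand S (set (take i rs)) (ps ! i) (rs ! i)
          \<and> (\<forall>r. greedy_cand S (set (take i rs)) (ps ! i) r \<longrightarrow> rect_area r \<le> rect_area (rs ! i)))"

end

theory Submission
  imports Defs
begin


lemma mem_rect_int: "p \<in> rect_int ((x1,y1),(x2,y2)) \<longleftrightarrow> (x1 < fst p \<and> fst p < x2 \<and> y1 < snd p \<and> snd p < y2)"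
  by (cases p) (auto simp: rect_int_def)

lemma disj_suff:
  assumes "x2 \<le> x1' \<or> x2' \<le> x1 \<or> y2 \<le> y1' \<or> y2' \<le> y1"
  shows "rect_int ((x1,y1),(x2,y2)) \<inter> rect_int ((x1',y1'),(x2',y2')) = {}"
  using assms by (auto simp: rect_int_def)

lemma disj_nec:
  fixes x1 y1 x2 y2 x1' y1' x2' y2' :: real
  assumes "rect_int ((x1,y1),(x2,y2)) \<inter> rect_int ((x1',y1'),(x2',y2')) = {}"
    and "x1 < x2" "y1 < y2" "x1' < x2'" "y1' < y2'"
  shows "x2 \<le> x1' \<or> x2' \<le> x1 \<or> y2 \<le> y1' \<or> y2' \<le> y1"
proof (rule ccontr)
  assume "\<not> ?thesis"
  hence h: "x1' < x2" "x1 < x2'" "y1' < y2" "y1 < y2'" by auto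
  let ?p = "((max x1 x1' + min x2 x2')/2, (max y1 y1' + min y2 y2')/2)"
  have "?p \<in> rect_int ((x1,y1),(x2,y2))" "?p \<in> rect_int ((x1',y1'),(x2',y2'))"
    using h assms(2-5) by (auto simp: rect_int_def max_def min_def)
  with assms(1) show False by auto
qed

lemma prod_eq_max:
  fixes x y x0 y0 :: real
  assumes "0 \<le> x" "x \<le> x0" "0 \<le> y" "y \<le> y0" "0 < x0" "0 < y0" "x0 * y0 \<le> x * y"
  shows "x = x0 \<and> y = y0"
proof -
  have 1: "x * y \<le> x0 * y" using assms by (intro mult_right_mono) auto
  have y: "y = y0"
  proof (rule ccontr)
    assume "y \<noteq> y0" then have "y < y0" using assms by auto
    then have "x0 * y < x0 * y0" using assms by simp
    then show False using 1 assms(7) by linarith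
  qed
  have "x = x0"
  proof (rule ccontr)
    assume "x \<noteq> x0" then have "x < x0" using assms by auto
    then have "x * y0 < x0 * y0" using assms by simp
    then show False using y assms(7) by simp
  qed
  with y show ?thesis by simp
qed

lemma prod_le: "0 \<le> x \<Longrightarrow> x \<le> x1 \<Longrightarrow> 0 \<le> y \<Longrightarrow> y \<le> y1 \<Longrightarrow> x * y \<le> x1 * (y1::real)"
  by (meson mult_mono order_trans)

lemma cand_D:
  assumes "greedy_cand S prev p r"
  obtains u v where "r = (p,(u,v))" "fst p \<le> u" "snd p \<le> v" "u \<le> 1" "v \<le> 1" "0 \<le> fst p" "0 \<le> snd p"
    "\<forall>q\<in>S. q \<notin> rect_int r" "\<forall>r'\<in>prev. rect_int r \<inter> rect_int r' = {}"
proof -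
  obtain u v where r: "r = (p,(u,v))" using assms by (cases r) (auto simp: greedy_cand_def anchored_ok_def)
  have a: "fst p \<le> u" "snd p \<le> v" "rect_set r \<subseteq> unit_sq" "\<forall>q\<in>S. q \<notin> rect_int r"
    "\<forall>r'\<in>prev. rect_int r \<inter> rect_int r' = {}"
    using assms r by (auto simp: greedy_cand_def anchored_ok_def)
  have "(u,v) \<in> rect_set r" "p \<in> rect_set r" using a(1,2) r by (auto simp: rect_set_def mem_Times_iff)
  then have "(u,v) \<in> unit_sq" "p \<in> unit_sq" using a(3) by auto
  then have "u \<le> 1" "v \<le> 1" "0 \<le> fst p" "0 \<le> snd p" by (auto simp: unit_sq_def mem_Times_iff)
  with that r a show ?thesis by blast
qed

lemma g_key:
  fixes g :: "real \<times> real \<Rightarrow> real"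
  assumes sym: "\<forall>x\<in>{0..1}. \<forall>y\<in>{0..1}. g (x, y) = g (y, x)"
    and incx: "\<forall>x\<in>{0..1}. \<forall>x'\<in>{0..1}. \<forall>y\<in>{0..1}. x > x' \<longrightarrow> g (x, y) > g (x', y)"
    and incy: "\<forall>x\<in>{0..1}. \<forall>y\<in>{0..1}. \<forall>y'\<in>{0..1}. y > y' \<longrightarrow> g (x, y) > g (x, y')"
    and p: "p \<in> unit_sq" and q: "q \<in> unit_sq"
    and m1: "max (fst q) (snd q) \<le> max (fst p) (snd p)" and m2: "min (fst q) (snd q) \<le> min (fst p) (snd p)"
    and st: "max (fst q) (snd q) < max (fst p) (snd p) \<or> min (fst q) (snd q) < min (fst p) (snd p)"
  shows "g q < g p"
proof -
  have gm: "g r = g (max (fst r) (snd r), min (fst r) (snd r))" if "r \<in> unit_sq" for r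
  proof (cases "snd r \<le> fst r")
    case True then show ?thesis by (cases r) (auto simp: max_def min_def)
  next
    case False
    then have "max (fst r) (snd r) = snd r" "min (fst r) (snd r) = fst r" by auto
    moreover have "g (fst r, snd r) = g (snd r, fst r)" using sym that by (auto simp: unit_sq_def mem_Times_iff)
    ultimately show ?thesis by (cases r) auto
  qed
  define M1 m1 M2 m2 where "M1 = max (fst p) (snd p)" "m1 = min (fst p) (snd p)"
    "M2 = max (fst q) (snd q)" "m2 = min (fst q) (snd q)"
  have r: "M1 \<in> {0..1}" "m1 \<in> {0..1}" "M2 \<in> {0..1}" "m2 \<in> {0..1}"
    using p q by (auto simp: unit_sq_def mem_Times_iff M1_m1_M2_m2_def)
  have le_y: "g (x, y') \<le> g (x, y)" if "x \<in> {0..1}" "y \<in> {0..1}" "y' \<in> {0..1}" "y' \<le> y" for x y y'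
    using incy that by (cases "y' = y") (auto intro: less_imp_le)
  have le_x: "g (x', y) \<le> g (x, y)" if "x \<in> {0..1}" "y \<in> {0..1}" "x' \<in> {0..1}" "x' \<le> x" for x y x'
    using incx that by (cases "x' = x") (auto intro: less_imp_le)
  have "g (M2, m2) < g (M1, m1)"
  proof (cases "M2 < M1")
    case True
    have "g (M2, m2) \<le> g (M2, m1)" using le_y r m2 by (auto simp: M1_m1_M2_m2_def)
    also have "\<dots> < g (M1, m1)" using incx r True by auto
    finally show ?thesis .
  next
    case False
    then have "m2 < m1" using st by (auto simp: M1_m1_M2_m2_def)
    have "g (M2, m2) < g (M2, m1)" using incy r \<open>m2 < m1\<close> by auto
    also have "\<dots> \<le> g (M1, m1)" using le_x r m1 by (auto simp: M1_m1_M2_m2_def)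
    finally show ?thesis .
  qed
  then show ?thesis using gm[OF p] gm[OF q] by (simp add: M1_m1_M2_m2_def)
qed

lemma meas_box: "x1 \<le> x2 \<Longrightarrow> y1 \<le> y2 \<Longrightarrow> measure lborel ({x1..x2} \<times> {y1..y2::real}) = (x2 - x1) * (y2 - y1)"
proof -
  assume a: "x1 \<le> x2" "y1 \<le> y2"
  have "{x1..x2} \<times> {y1..y2} = cbox (x1,y1) (x2,y2)" by (simp add: cbox_Pair_eq)
  then show ?thesis using a by (simp add: content_Pair)
qed

lemma rect_set_borel: "rect_set r \<in> sets lborel"
  unfolding rect_set_def sets_lborel by (intro borel_closed closed_Times) auto

lemma rect_set_borel': "rect_set r \<in> sets borel"
  unfolding rect_set_def by (intro borel_closed closed_Times) auto

lemma unit_sq_measure: "measure lborel unit_sq = 1"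
  unfolding unit_sq_def using meas_box[of 0 1 0 1] by simp



datatype ty = TO | TA | TD | TC | TP | TQ

lemma ty_UNIV: "(UNIV :: ty set) = {TO, TA, TD, TC, TP, TQ}"
  using ty.exhaust by auto

locale chain =
  fixes c a h z :: real and n :: nat
  assumes c0: "0 < c" and ca: "c < a" and ah: "a < h" and hz: "h < z" and z1: "z < 1"
    and wide: "c * (1 - a) < h - a"
begin

definition s :: "nat \<Rightarrow> real" where "s k = (1 - z) ^ k"
definition X :: "nat \<Rightarrow> real" where "X k = 1 - s k"
definition M :: "nat \<Rightarrow> real \<times> real \<Rightarrow> point" where "M k p = (X k + s k * fst p, X k + s k * snd p)"

definition rp :: "ty \<Rightarrow> real \<times> real" where
  "rp t = (case t of TO \<Rightarrow> (0,0) | TA \<Rightarrow> (0,a) | TD \<Rightarrow> (c,0) | TC \<Rightarrow> (c,h) | TP \<Rightarrow> (c,z) | TQ \<Rightarrow> (z,h))"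
definition gu :: "ty \<Rightarrow> real \<times> real" where
  "gu t = (case t of TO \<Rightarrow> (c,a) | TA \<Rightarrow> (1,h) | TD \<Rightarrow> (1,a) | TC \<Rightarrow> (z,z) | TP \<Rightarrow> (z,1) | TQ \<Rightarrow> (1,z))"
definition ou :: "ty \<Rightarrow> real \<times> real" where
  "ou t = (case t of TO \<Rightarrow> (c,a) | TA \<Rightarrow> (c,1) | TD \<Rightarrow> (1,h) | TC \<Rightarrow> (z,z) | TP \<Rightarrow> (z,1) | TQ \<Rightarrow> (1,z))"
definition gup :: "nat \<Rightarrow> ty \<Rightarrow> real \<times> real" where "gup k t = (if k = n then (1,1) else gu t)"
definition oup :: "nat \<Rightarrow> ty \<Rightarrow> real \<times> real" where "oup k t = (if k = n then (1,1) else ou t)"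

definition pt :: "nat \<Rightarrow> ty \<Rightarrow> point" where "pt k t = M k (rp t)"
definition gR :: "nat \<Rightarrow> ty \<Rightarrow> rect" where "gR k t = (pt k t, M k (gup k t))"
definition oR :: "nat \<Rightarrow> ty \<Rightarrow> rect" where "oR k t = (pt k t, M k (oup k t))"

definition I :: "(nat \<times> ty) set" where "I = {(k,t). k < n \<or> (k = n \<and> t = TO)}"
definition S :: "point set" where "S = (\<lambda>(k,t). pt k t) ` I"

lemma s_pos: "0 < s k" using z1 by (simp add: s_def)
lemma s_le1: "s k \<le> 1" using z1 hz ah ca c0 by (simp add: s_def power_le_one)
lemma X_ge0: "0 \<le> X k" using s_le1 by (simp add: X_def)
lemma Xs: "X k + s k = 1" by (simp add: X_def)
lemma X_Suc: "X (Suc k) = X k + s k * z" by (simp add: X_def s_def algebra_simps)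
lemma s_Suc: "s (Suc k) = s k * (1 - z)" by (simp add: s_def)
lemma X_mono: "k \<le> j \<Longrightarrow> X k \<le> X j"
  unfolding X_def s_def using z1 hz ah ca c0 by (simp add: power_decreasing)

lemma Mcmp_lt[simp]: "X k + s k * u < X k + s k * v \<longleftrightarrow> u < v"
  using s_pos[of k] by simp
lemma Mcmp_le[simp]: "X k + s k * u \<le> X k + s k * v \<longleftrightarrow> u \<le> v"
  using s_pos[of k] by simp
lemma scmp_lt[simp]: "s k * u < s k * v \<longleftrightarrow> u < v"
  using s_pos[of k] by simp
lemma scmp_le[simp]: "s k * u \<le> s k * v \<longleftrightarrow> u \<le> v"
  using s_pos[of k] by simp
lemma M_simps[simp]: "fst (M k p) = X k + s k * fst p" "snd (M k p) = X k + s k * snd p"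
  by (simp_all add: M_def)

lemmas ord = c0 ca ah hz z1

lemma rp_le_gu: "fst (rp t) \<le> fst (gu t) \<and> snd (rp t) \<le> snd (gu t) \<and> fst (gu t) \<le> 1 \<and> snd (gu t) \<le> 1 \<and> 0 \<le> fst (rp t) \<and> 0 \<le> snd (rp t)"
  using ord by (cases t) (auto simp: rp_def gu_def)
lemma rp_le_ou: "fst (rp t) \<le> fst (ou t) \<and> snd (rp t) \<le> snd (ou t) \<and> fst (ou t) \<le> 1 \<and> snd (ou t) \<le> 1"
  using ord by (cases t) (auto simp: rp_def ou_def)
lemma gu_z: "fst (gu t) \<le> z \<or> snd (gu t) \<le> z"
  using ord by (cases t) (auto simp: gu_def)
lemma ou_z: "fst (ou t) \<le> z \<or> snd (ou t) \<le> z"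
  using ord by (cases t) (auto simp: ou_def)
lemma rp_z: "fst (rp t) < z \<or> snd (rp t) < z"
  using ord by (cases t) (auto simp: rp_def)
lemma gu_disj: "t \<noteq> t' \<Longrightarrow> fst (gu t) \<le> fst (rp t') \<or> fst (gu t') \<le> fst (rp t) \<or> snd (gu t) \<le> snd (rp t') \<or> snd (gu t') \<le> snd (rp t)"
  using ord by (cases t; cases t') (auto simp: rp_def gu_def)
lemma ou_disj: "t \<noteq> t' \<Longrightarrow> fst (ou t) \<le> fst (rp t') \<or> fst (ou t') \<le> fst (rp t) \<or> snd (ou t) \<le> snd (rp t') \<or> snd (ou t') \<le> snd (rp t)"
  using ord by (cases t; cases t') (auto simp: rp_def ou_def)
lemma gu_pts: "\<not> (fst (rp t) < fst (rp t') \<and> fst (rp t') < fst (gu t) \<and> snd (rp t) < snd (rp t') \<and> snd (rp t') < snd (gu t))"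
  using ord by (cases t; cases t') (auto simp: rp_def gu_def)
lemma ou_pts: "\<not> (fst (rp t) < fst (rp t') \<and> fst (rp t') < fst (ou t) \<and> snd (rp t) < snd (rp t') \<and> snd (rp t') < snd (ou t))"
  using ord by (cases t; cases t') (auto simp: rp_def ou_def)

end


lemma disj_suff':
  "fst (snd r) \<le> fst (fst r') \<or> fst (snd r') \<le> fst (fst r) \<or> snd (snd r) \<le> snd (fst r') \<or> snd (snd r') \<le> snd (fst r)
   \<Longrightarrow> rect_int r \<inter> rect_int r' = {}"
  by (auto simp: rect_int_def)
lemma mem_rect_int': "q \<in> rect_int r \<longleftrightarrow> fst (fst r) < fst q \<and> fst q < fst (snd r) \<and> snd (fst r) < snd q \<and> snd q < snd (snd r)"
  by (cases q) (auto simp: rect_int_def)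

context chain begin

lemma pt_lev: "X k \<le> fst (pt k t) \<and> X k \<le> snd (pt k t)"
  using rp_le_gu[of t] s_pos[of k] by (simp add: pt_def)

lemma pt_min: "fst (pt k t) < X (Suc k) \<or> snd (pt k t) < X (Suc k)"
  using rp_z[of t] s_pos[of k] by (auto simp: pt_def X_Suc)

lemma I_n: "(k,t) \<in> I \<Longrightarrow> k \<le> n" by (auto simp: I_def)

lemma pt_in_S: "(k,t) \<in> I \<Longrightarrow> pt k t \<in> S" by (auto simp: S_def)

lemma S_cases: "q \<in> S \<Longrightarrow> (\<And>k t. (k,t) \<in> I \<Longrightarrow> q = pt k t \<Longrightarrow> P) \<Longrightarrow> P"
  by (auto simp: S_def)

lemma finite_I: "finite I"
proof -
  have "I \<subseteq> {..n} \<times> UNIV" by (auto simp: I_def)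
  moreover have "finite ({..n} \<times> (UNIV :: ty set))" by (simp add: ty_UNIV)
  ultimately show ?thesis by (rule finite_subset)
qed

lemma finite_S: "finite S" using finite_I by (simp add: S_def)

lemma fam_anch:
  fixes U :: "nat \<Rightarrow> ty \<Rightarrow> real \<times> real"
  assumes U1: "\<And>k t. (k,t) \<in> I \<Longrightarrow> fst (rp t) \<le> fst (U k t) \<and> snd (rp t) \<le> snd (U k t) \<and> fst (U k t) \<le> 1 \<and> snd (U k t) \<le> 1"
    and U2: "\<And>k t. k < n \<Longrightarrow> fst (U k t) \<le> z \<or> snd (U k t) \<le> z"
    and U5: "\<And>k t t'. (k,t) \<in> I \<Longrightarrow> (k,t') \<in> I \<Longrightarrow> \<not> (fst (rp t) < fst (rp t') \<and> fst (rp t') < fst (U k t) \<and> snd (rp t) < snd (rp t') \<and> snd (rp t') < snd (U k t))"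
    and kt: "(k,t) \<in> I"
  shows "anchored_ok S (pt k t) (pt k t, M k (U k t))"
proof -
  have u1: "fst (rp t) \<le> fst (U k t)" "snd (rp t) \<le> snd (U k t)" "fst (U k t) \<le> 1" "snd (U k t) \<le> 1"
    using U1[OF kt] by auto
  have r0: "0 \<le> fst (rp t)" "0 \<le> snd (rp t)" using rp_le_gu[of t] by auto
  have sp: "0 < s k" by (rule s_pos)
  have up1: "X k + s k * fst (U k t) \<le> 1" "X k + s k * snd (U k t) \<le> 1"
    using Mcmp_le[of k "fst (U k t)" 1] Mcmp_le[of k "snd (U k t)" 1] u1 Xs[of k] by auto
  have lo0: "0 \<le> X k + s k * fst (rp t)" "0 \<le> X k + s k * snd (rp t)"
    using X_ge0[of k] sp r0 by auto
  have sub: "rect_set (pt k t, M k (U k t)) \<subseteq> unit_sq"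
    using up1 lo0 by (auto simp: rect_set_def unit_sq_def pt_def mem_Times_iff)
  have nopt: "q \<notin> rect_int (pt k t, M k (U k t))" if q: "q \<in> S" for q
  proof -
    obtain k' t' where kt': "(k',t') \<in> I" and qe: "q = pt k' t'" using q by (rule S_cases)
    consider "k' = k" | "k < k'" | "k' < k" by linarith
    then show ?thesis
    proof cases
      case 1
      then show ?thesis using U5[OF kt, of t'] kt' by (simp add: qe mem_rect_int' pt_def)
    next
      case 2
      then have kn: "k < n" using I_n[OF kt'] by simp
      have "X (Suc k) \<le> X k'" using 2 by (intro X_mono) simp
      then have ql: "X (Suc k) \<le> fst q" "X (Suc k) \<le> snd q" using pt_lev[of k' t'] qe by auto
      have "X k + s k * fst (U k t) \<le> X (Suc k) \<or> X k + s k * snd (U k t) \<le> X (Suc k)"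
        using U2[OF kn, of t] by (simp add: X_Suc)
      then show ?thesis using ql by (auto simp: mem_rect_int')
    next
      case 3
      have "X (Suc k') \<le> X k" using 3 by (intro X_mono) simp
      then have "fst q < X k \<or> snd q < X k" using pt_min[of k' t'] qe by auto
      moreover have "X k \<le> fst (pt k t)" "X k \<le> snd (pt k t)" using pt_lev by auto
      ultimately show ?thesis by (auto simp: mem_rect_int')
    qed
  qed
  show ?thesis unfolding anchored_ok_def using sub nopt u1 sp by (auto simp: pt_def)
qed

lemma fam_disj:
  fixes U :: "nat \<Rightarrow> ty \<Rightarrow> real \<times> real"
  assumes U2: "\<And>k t. k < n \<Longrightarrow> fst (U k t) \<le> z \<or> snd (U k t) \<le> z"
    and U4: "\<And>k t t'. (k,t) \<in> I \<Longrightarrow> (k,t') \<in> I \<Longrightarrow> t \<noteq> t' \<Longrightarrow>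
         fst (U k t) \<le> fst (rp t') \<or> fst (U k t') \<le> fst (rp t) \<or> snd (U k t) \<le> snd (rp t') \<or> snd (U k t') \<le> snd (rp t)"
    and kt: "(k,t) \<in> I" and kt': "(k',t') \<in> I" and ne: "(k,t) \<noteq> (k',t')"
  shows "rect_int (pt k t, M k (U k t)) \<inter> rect_int (pt k' t', M k' (U k' t')) = {}"
proof -
  have gen: "rect_int (pt k t, M k (U k t)) \<inter> rect_int (pt k' t', M k' (U k' t')) = {}"
    if kt: "(k,t) \<in> I" and kt': "(k',t') \<in> I" and lt: "k < k'" for k t k' t'
  proof -
    have kn: "k < n" using I_n[OF kt'] lt by simp
    have "X (Suc k) \<le> X k'" using lt by (intro X_mono) simp
    then have ql: "X (Suc k) \<le> fst (pt k' t')" "X (Suc k) \<le> snd (pt k' t')" using pt_lev[of k' t'] by auto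
    have "X k + s k * fst (U k t) \<le> X (Suc k) \<or> X k + s k * snd (U k t) \<le> X (Suc k)"
      using U2[OF kn, of t] by (simp add: X_Suc)
    then show ?thesis using ql by (intro disj_suff') auto
  qed
  consider "k = k'" | "k < k'" | "k' < k" by linarith
  then show ?thesis
  proof cases
    case 1
    then have "t \<noteq> t'" using ne by simp
    then show ?thesis using U4[OF kt, of t'] kt' 1 by (intro disj_suff') (auto simp: pt_def)
  next
    case 2 then show ?thesis using gen[OF kt kt'] by simp
  next
    case 3 then show ?thesis using gen[OF kt' kt] by blast
  qed
qed

lemma gup_props:
  "(k,t) \<in> I \<Longrightarrow> fst (rp t) \<le> fst (gup k t) \<and> snd (rp t) \<le> snd (gup k t) \<and> fst (gup k t) \<le> 1 \<and> snd (gup k t) \<le> 1"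
  "k < n \<Longrightarrow> fst (gup k t) \<le> z \<or> snd (gup k t) \<le> z"
  "(k,t) \<in> I \<Longrightarrow> (k,t') \<in> I \<Longrightarrow> \<not> (fst (rp t) < fst (rp t') \<and> fst (rp t') < fst (gup k t) \<and> snd (rp t) < snd (rp t') \<and> snd (rp t') < snd (gup k t))"
  "(k,t) \<in> I \<Longrightarrow> (k,t') \<in> I \<Longrightarrow> t \<noteq> t' \<Longrightarrow>
         fst (gup k t) \<le> fst (rp t') \<or> fst (gup k t') \<le> fst (rp t) \<or> snd (gup k t) \<le> snd (rp t') \<or> snd (gup k t') \<le> snd (rp t)"
  using rp_le_gu[of t] gu_z[of t] gu_pts[of t t'] gu_disj[of t t']
  by (auto simp: gup_def I_def rp_def)

lemma oup_props:
  "(k,t) \<in> I \<Longrightarrow> fst (rp t) \<le> fst (oup k t) \<and> snd (rp t) \<le> snd (oup k t) \<and> fst (oup k t) \<le> 1 \<and> snd (oup k t) \<le> 1"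
  "k < n \<Longrightarrow> fst (oup k t) \<le> z \<or> snd (oup k t) \<le> z"
  "(k,t) \<in> I \<Longrightarrow> (k,t') \<in> I \<Longrightarrow> \<not> (fst (rp t) < fst (rp t') \<and> fst (rp t') < fst (oup k t) \<and> snd (rp t) < snd (rp t') \<and> snd (rp t') < snd (oup k t))"
  "(k,t) \<in> I \<Longrightarrow> (k,t') \<in> I \<Longrightarrow> t \<noteq> t' \<Longrightarrow>
         fst (oup k t) \<le> fst (rp t') \<or> fst (oup k t') \<le> fst (rp t) \<or> snd (oup k t) \<le> snd (rp t') \<or> snd (oup k t') \<le> snd (rp t)"
  using rp_le_gu[of t] rp_le_ou[of t] ou_z[of t] ou_pts[of t t'] ou_disj[of t t']
  by (auto simp: oup_def I_def rp_def)

lemma gR_anch: "(k,t) \<in> I \<Longrightarrow> anchored_ok S (pt k t) (gR k t)"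
  unfolding gR_def by (rule fam_anch) (use gup_props in auto)
lemma oR_anch: "(k,t) \<in> I \<Longrightarrow> anchored_ok S (pt k t) (oR k t)"
  unfolding oR_def by (rule fam_anch) (use oup_props in auto)
lemma gR_disj: "(k,t) \<in> I \<Longrightarrow> (k',t') \<in> I \<Longrightarrow> (k,t) \<noteq> (k',t') \<Longrightarrow> rect_int (gR k t) \<inter> rect_int (gR k' t') = {}"
  unfolding gR_def by (rule fam_disj) (use gup_props in auto)
lemma oR_disj: "(k,t) \<in> I \<Longrightarrow> (k',t') \<in> I \<Longrightarrow> (k,t) \<noteq> (k',t') \<Longrightarrow> rect_int (oR k t) \<inter> rect_int (oR k' t') = {}"
  unfolding oR_def by (rule fam_disj) (use oup_props in auto)

end


lemma pos_of_area: "0 \<le> x \<Longrightarrow> 0 \<le> y \<Longrightarrow> 0 < m \<Longrightarrow> m \<le> x * (y::real) \<Longrightarrow> 0 < x \<and> 0 < y"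
  by (metis less_eq_real_def mult_zero_left mult_zero_right not_le)

context chain begin

lemma sX1: "1 - X k = s k" using Xs[of k] by linarith
lemma X_lt1: "X k < 1" using s_pos[of k] Xs[of k] by linarith

lemma sprod: "0 < s k * c" "s k * c < s k * a" "s k * a < s k * h" "s k * h < s k * z" "s k * z < s k" "0 < s k * a"
  "0 < s k" "s k * c < s k" "s k * h < s k" "s k * a < s k" "s k * c < s k * z" "s k * c < s k * h"
proof -
  have sp: "0 < s k" by (rule s_pos)
  have "s k * z < s k * 1" using sp z1 by (intro mult_strict_left_mono) auto
  then show "s k * z < s k" by simp
  then show "0 < s k * c" "s k * c < s k * a" "s k * a < s k * h" "s k * h < s k * z" "0 < s k * a"
    "0 < s k" "s k * c < s k" "s k * h < s k" "s k * a < s k" "s k * c < s k * z" "s k * c < s k * h"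
    using sp ord by auto
qed

lemma p_simps:
  "pt k TO = (X k, X k)" "pt k TA = (X k, X k + s k * a)" "pt k TD = (X k + s k * c, X k)"
  "pt k TC = (X k + s k * c, X k + s k * h)" "pt k TP = (X k + s k * c, X k + s k * z)"
  "pt k TQ = (X k + s k * z, X k + s k * h)"
  by (simp_all add: pt_def M_def rp_def)

lemma g_simps: "k < n \<Longrightarrow> gR k TO = ((X k, X k), (X k + s k * c, X k + s k * a))"
  "k < n \<Longrightarrow> gR k TA = ((X k, X k + s k * a), (1, X k + s k * h))"
  "k < n \<Longrightarrow> gR k TD = ((X k + s k * c, X k), (1, X k + s k * a))"
  "k < n \<Longrightarrow> gR k TC = ((X k + s k * c, X k + s k * h), (X k + s k * z, X k + s k * z))"
  "k < n \<Longrightarrow> gR k TP = ((X k + s k * c, X k + s k * z), (X k + s k * z, 1))"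
  "k < n \<Longrightarrow> gR k TQ = ((X k + s k * z, X k + s k * h), (1, X k + s k * z))"
  "gR n TO = ((X n, X n), (1, 1))"
  using Xs[of k] Xs[of n] by (simp_all add: gR_def pt_def M_def rp_def gup_def gu_def)

lemma gO_next: "\<exists>w1 w2. 0 < w1 \<and> 0 < w2 \<and> gR (Suc k) TO = ((X (Suc k), X (Suc k)), (X (Suc k) + w1, X (Suc k) + w2))"
proof -
  have "0 < fst (gup (Suc k) TO)" "0 < snd (gup (Suc k) TO)" using ord by (auto simp: gup_def gu_def)
  then show ?thesis using s_pos[of "Suc k"]
    by (intro exI[of _ "s (Suc k) * fst (gup (Suc k) TO)"] exI[of _ "s (Suc k) * snd (gup (Suc k) TO)"])
       (auto simp: gR_def pt_def M_def rp_def)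
qed

lemma uniq_TA:
  assumes kn: "k < n" and cand: "greedy_cand S prev (pt k TA) r" and ar: "rect_area (gR k TA) \<le> rect_area r"
  shows "r = gR k TA"
proof -
  obtain u v where r: "r = (pt k TA, (u,v))" and b: "fst (pt k TA) \<le> u" "snd (pt k TA) \<le> v" "u \<le> 1" "v \<le> 1"
     and np: "\<forall>q\<in>S. q \<notin> rect_int r" using cand by (rule cand_D) blast
  have C: "pt k TC \<in> S" using kn by (intro pt_in_S) (simp add: I_def)
  note o1 = sprod[of k]
  from np C have "pt k TC \<notin> rect_int r" by blast
  hence cs: "u \<le> X k + s k * c \<or> v \<le> X k + s k * h" using o1 by (auto simp: r p_simps mem_rect_int' not_less)
  have ag: "rect_area (gR k TA) = s k * (s k * h - s k * a)" using sX1[of k] kn by (simp add: g_simps rect_area_def)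
  have arr: "rect_area r = (u - X k) * (v - (X k + s k * a))" by (simp add: r p_simps rect_area_def)
  show ?thesis
  proof (cases "u \<le> X k + s k * c")
    case True
    have "rect_area r \<le> (s k * c) * (s k - s k * a)"
      unfolding arr by (rule prod_le) (use True b Xs[of k] in \<open>auto simp: p_simps\<close>)
    also have "\<dots> = s k * s k * (c * (1 - a))" by (simp add: algebra_simps)
    also have "\<dots> < s k * s k * (h - a)" using wide s_pos[of k] by simp
    also have "\<dots> = rect_area (gR k TA)" by (simp add: ag algebra_simps)
    finally have False using ar by simp
    then show ?thesis ..
  next
    case False
    then have v: "v \<le> X k + s k * h" using cs by simp
    have "u - X k = s k \<and> v - (X k + s k * a) = s k * h - s k * a"
      by (rule prod_eq_max) (use c0 ca ah hz z1 s_pos[of k] b v Xs[of k] o1 ar ag arr in \<open>auto simp: p_simps\<close>)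
    then show ?thesis using Xs[of k] kn by (simp add: r g_simps p_simps)
  qed
qed

lemma uniq_TD:
  assumes kn: "k < n" and cand: "greedy_cand S prev (pt k TD) r" and ar: "rect_area (gR k TD) \<le> rect_area r"
    and bl: "gR k TA \<in> prev"
  shows "r = gR k TD"
proof -
  obtain u v where r: "r = (pt k TD, (u,v))" and b: "fst (pt k TD) \<le> u" "snd (pt k TD) \<le> v" "u \<le> 1" "v \<le> 1"
     and dp: "\<forall>r'\<in>prev. rect_int r \<inter> rect_int r' = {}" using cand by (rule cand_D) blast
  note o1 = sprod[of k]
  have ag: "rect_area (gR k TD) = (s k - s k * c) * (s k * a)" using sX1[of k] kn by (simp add: g_simps rect_area_def)
  have arr: "rect_area r = (u - (X k + s k * c)) * (v - X k)" by (simp add: r p_simps rect_area_def)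
  have "0 < (s k - s k * c) * (s k * a)" using o1 c0 ca ah hz z1 s_pos[of k] by (intro mult_pos_pos) auto
  then have nd: "0 < u - (X k + s k * c) \<and> 0 < v - X k"
    by (intro pos_of_area[of _ _ "rect_area (gR k TD)"]) (use c0 ca ah hz z1 s_pos[of k] b ar ag arr in \<open>auto simp: p_simps\<close>)
  have "rect_int ((X k + s k * c, X k), (u,v)) \<inter> rect_int ((X k, X k + s k * a), (1, X k + s k * h)) = {}"
    using dp bl kn by (auto simp: r p_simps g_simps)
  from disj_nec[OF this] nd o1 X_lt1[of k]
  have "v \<le> X k + s k * a" using Xs[of k] by auto
  then have "u - (X k + s k * c) = s k - s k * c \<and> v - X k = s k * a"
    by (intro prod_eq_max) (use c0 ca ah hz z1 s_pos[of k] b o1 ar ag arr Xs[of k] in \<open>auto simp: p_simps\<close>)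
  then show ?thesis using Xs[of k] kn by (simp add: r g_simps p_simps)
qed

lemma uniq_TO:
  assumes kn: "k < n" and cand: "greedy_cand S prev (pt k TO) r" and ar: "rect_area (gR k TO) \<le> rect_area r"
    and bl: "gR k TA \<in> prev" "gR k TD \<in> prev"
  shows "r = gR k TO"
proof -
  obtain u v where r: "r = (pt k TO, (u,v))" and b: "fst (pt k TO) \<le> u" "snd (pt k TO) \<le> v" "u \<le> 1" "v \<le> 1"
     and dp: "\<forall>r'\<in>prev. rect_int r \<inter> rect_int r' = {}" using cand by (rule cand_D) blast
  note o1 = sprod[of k]
  have ag: "rect_area (gR k TO) = (s k * c) * (s k * a)" using kn by (simp add: g_simps rect_area_def)
  have arr: "rect_area r = (u - X k) * (v - X k)" by (simp add: r p_simps rect_area_def)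
  have "0 < (s k * c) * (s k * a)" using o1 c0 ca ah hz z1 s_pos[of k] by (intro mult_pos_pos) auto
  then have nd: "0 < u - X k \<and> 0 < v - X k"
    by (intro pos_of_area[of _ _ "rect_area (gR k TO)"]) (use c0 ca ah hz z1 s_pos[of k] b ar ag arr in \<open>auto simp: p_simps\<close>)
  have "rect_int ((X k, X k), (u,v)) \<inter> rect_int ((X k, X k + s k * a), (1, X k + s k * h)) = {}"
    using dp bl kn by (auto simp: r p_simps g_simps)
  from disj_nec[OF this] nd o1 X_lt1[of k]
  have v: "v \<le> X k + s k * a" by auto
  have "rect_int ((X k, X k), (u,v)) \<inter> rect_int ((X k + s k * c, X k), (1, X k + s k * a)) = {}"
    using dp bl kn by (auto simp: r p_simps g_simps)
  from disj_nec[OF this] nd o1 X_lt1[of k] Xs[of k]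
  have u: "u \<le> X k + s k * c" by auto
  have "u - X k = s k * c \<and> v - X k = s k * a"
    by (intro prod_eq_max) (use c0 ca ah hz z1 s_pos[of k] b u v o1 ar ag arr in \<open>auto simp: p_simps\<close>)
  then show ?thesis using kn by (simp add: r g_simps p_simps)
qed

lemma uniq_Tn:
  assumes cand: "greedy_cand S prev (pt n TO) r" and ar: "rect_area (gR n TO) \<le> rect_area r"
  shows "r = gR n TO"
proof -
  obtain u v where r: "r = (pt n TO, (u,v))" and b: "fst (pt n TO) \<le> u" "snd (pt n TO) \<le> v" "u \<le> 1" "v \<le> 1"
     using cand by (rule cand_D) blast
  have ag: "rect_area (gR n TO) = s n * s n" using sX1[of n] by (simp add: g_simps rect_area_def)
  have arr: "rect_area r = (u - X n) * (v - X n)" by (simp add: r p_simps rect_area_def)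
  have "u - X n = s n \<and> v - X n = s n"
    by (intro prod_eq_max) (use c0 ca ah hz z1 s_pos[of k] b ar ag arr s_pos[of n] sX1[of n] in \<open>auto simp: p_simps\<close>)
  then show ?thesis using Xs[of n] by (simp add: r g_simps p_simps)
qed

lemma uniq_TC:
  assumes kn: "k < n" and cand: "greedy_cand S prev (pt k TC) r" and ar: "rect_area (gR k TC) \<le> rect_area r"
    and bl: "gR k TP \<in> prev" "gR k TQ \<in> prev"
  shows "r = gR k TC"
proof -
  obtain u v where r: "r = (pt k TC, (u,v))" and b: "fst (pt k TC) \<le> u" "snd (pt k TC) \<le> v" "u \<le> 1" "v \<le> 1"
     and dp: "\<forall>r'\<in>prev. rect_int r \<inter> rect_int r' = {}" using cand by (rule cand_D) blast
  note o1 = sprod[of k]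
  have ag: "rect_area (gR k TC) = (s k * z - s k * c) * (s k * z - s k * h)" using kn by (simp add: g_simps rect_area_def)
  have arr: "rect_area r = (u - (X k + s k * c)) * (v - (X k + s k * h))" by (simp add: r p_simps rect_area_def)
  have "0 < (s k * z - s k * c) * (s k * z - s k * h)" using o1 c0 ca ah hz z1 s_pos[of k] by (intro mult_pos_pos) auto
  then have nd: "0 < u - (X k + s k * c) \<and> 0 < v - (X k + s k * h)"
    by (intro pos_of_area[of _ _ "rect_area (gR k TC)"]) (use c0 ca ah hz z1 s_pos[of k] b ar ag arr in \<open>auto simp: p_simps\<close>)
  have "rect_int ((X k + s k * c, X k + s k * h), (u,v)) \<inter> rect_int ((X k + s k * c, X k + s k * z), (X k + s k * z, 1)) = {}"
    using dp bl kn by (auto simp: r p_simps g_simps)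
  from disj_nec[OF this] nd o1 Xs[of k]
  have v: "v \<le> X k + s k * z" by auto
  have "rect_int ((X k + s k * c, X k + s k * h), (u,v)) \<inter> rect_int ((X k + s k * z, X k + s k * h), (1, X k + s k * z)) = {}"
    using dp bl kn by (auto simp: r p_simps g_simps)
  from disj_nec[OF this] nd o1 Xs[of k]
  have u: "u \<le> X k + s k * z" by auto
  have "u - (X k + s k * c) = s k * z - s k * c \<and> v - (X k + s k * h) = s k * z - s k * h"
    by (intro prod_eq_max) (use c0 ca ah hz z1 s_pos[of k] b u v o1 ar ag arr in \<open>auto simp: p_simps\<close>)
  then show ?thesis using kn by (simp add: r g_simps p_simps)
qed

lemma uniq_TP:
  assumes kn: "k < n" and cand: "greedy_cand S prev (pt k TP) r" and ar: "rect_area (gR k TP) \<le> rect_area r"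
    and bl: "gR (Suc k) TO \<in> prev"
  shows "r = gR k TP"
proof -
  obtain u v where r: "r = (pt k TP, (u,v))" and b: "fst (pt k TP) \<le> u" "snd (pt k TP) \<le> v" "u \<le> 1" "v \<le> 1"
     and dp: "\<forall>r'\<in>prev. rect_int r \<inter> rect_int r' = {}" using cand by (rule cand_D) blast
  note o1 = sprod[of k]
  obtain w1 w2 where w: "0 < w1" "0 < w2" and gw: "gR (Suc k) TO = ((X (Suc k), X (Suc k)), (X (Suc k) + w1, X (Suc k) + w2))"
    using gO_next by blast
  have ag: "rect_area (gR k TP) = (s k * z - s k * c) * (s k - s k * z)" using kn sX1[of k] by (simp add: g_simps rect_area_def)
  have arr: "rect_area r = (u - (X k + s k * c)) * (v - (X k + s k * z))" by (simp add: r p_simps rect_area_def)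
  have "0 < (s k * z - s k * c) * (s k - s k * z)" using o1 c0 ca ah hz z1 s_pos[of k] by (intro mult_pos_pos) auto
  then have nd: "0 < u - (X k + s k * c) \<and> 0 < v - (X k + s k * z)"
    by (intro pos_of_area[of _ _ "rect_area (gR k TP)"]) (use c0 ca ah hz z1 s_pos[of k] b ar ag arr in \<open>auto simp: p_simps\<close>)
  have "rect_int ((X k + s k * c, X k + s k * z), (u,v)) \<inter> rect_int ((X (Suc k), X (Suc k)), (X (Suc k) + w1, X (Suc k) + w2)) = {}"
    using dp bl by (auto simp: r p_simps gw)
  from disj_nec[OF this] nd o1 w
  have u: "u \<le> X k + s k * z" by (auto simp: X_Suc)
  have "u - (X k + s k * c) = s k * z - s k * c \<and> v - (X k + s k * z) = s k - s k * z"
    by (intro prod_eq_max) (use c0 ca ah hz z1 s_pos[of k] b u o1 ar ag arr Xs[of k] in \<open>auto simp: p_simps\<close>)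
  then show ?thesis using kn Xs[of k] by (simp add: r g_simps p_simps)
qed

lemma uniq_TQ:
  assumes kn: "k < n" and cand: "greedy_cand S prev (pt k TQ) r" and ar: "rect_area (gR k TQ) \<le> rect_area r"
    and bl: "gR (Suc k) TO \<in> prev"
  shows "r = gR k TQ"
proof -
  obtain u v where r: "r = (pt k TQ, (u,v))" and b: "fst (pt k TQ) \<le> u" "snd (pt k TQ) \<le> v" "u \<le> 1" "v \<le> 1"
     and dp: "\<forall>r'\<in>prev. rect_int r \<inter> rect_int r' = {}" using cand by (rule cand_D) blast
  note o1 = sprod[of k]
  obtain w1 w2 where w: "0 < w1" "0 < w2" and gw: "gR (Suc k) TO = ((X (Suc k), X (Suc k)), (X (Suc k) + w1, X (Suc k) + w2))"
    using gO_next by blast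
  have ag: "rect_area (gR k TQ) = (s k - s k * z) * (s k * z - s k * h)" using kn sX1[of k] by (simp add: g_simps rect_area_def)
  have arr: "rect_area r = (u - (X k + s k * z)) * (v - (X k + s k * h))" by (simp add: r p_simps rect_area_def)
  have "0 < (s k - s k * z) * (s k * z - s k * h)" using o1 c0 ca ah hz z1 s_pos[of k] by (intro mult_pos_pos) auto
  then have nd: "0 < u - (X k + s k * z) \<and> 0 < v - (X k + s k * h)"
    by (intro pos_of_area[of _ _ "rect_area (gR k TQ)"]) (use c0 ca ah hz z1 s_pos[of k] b ar ag arr in \<open>auto simp: p_simps\<close>)
  have "rect_int ((X k + s k * z, X k + s k * h), (u,v)) \<inter> rect_int ((X (Suc k), X (Suc k)), (X (Suc k) + w1, X (Suc k) + w2)) = {}"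
    using dp bl by (auto simp: r p_simps gw)
  from disj_nec[OF this] nd o1 w
  have v: "v \<le> X k + s k * z" by (auto simp: X_Suc)
  have "u - (X k + s k * z) = s k - s k * z \<and> v - (X k + s k * h) = s k * z - s k * h"
    by (intro prod_eq_max) (use c0 ca ah hz z1 s_pos[of k] b v o1 ar ag arr Xs[of k] in \<open>auto simp: p_simps\<close>)
  then show ?thesis using kn Xs[of k] by (simp add: r g_simps p_simps)
qed

end


lemma meas_rect: "fst (fst r) \<le> fst (snd r) \<Longrightarrow> snd (fst r) \<le> snd (snd r) \<Longrightarrow> measure lborel (rect_set r) = rect_area r"
  unfolding rect_set_def rect_area_def by (rule meas_box)

locale chain_g = chain +
  fixes g :: "real \<times> real \<Rightarrow> real"
  assumes sym: "\<forall>x\<in>{0..1}. \<forall>y\<in>{0..1}. g (x, y) = g (y, x)"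
    and incx: "\<forall>x\<in>{0..1}. \<forall>x'\<in>{0..1}. \<forall>y\<in>{0..1}. x > x' \<longrightarrow> g (x, y) > g (x', y)"
    and incy: "\<forall>x\<in>{0..1}. \<forall>y\<in>{0..1}. \<forall>y'\<in>{0..1}. y > y' \<longrightarrow> g (x, y) > g (x, y')"
begin

lemma pt_unit: "pt k t \<in> unit_sq"
proof -
  have r: "0 \<le> fst (rp t)" "0 \<le> snd (rp t)" "fst (rp t) \<le> 1" "snd (rp t) \<le> 1"
    using rp_le_gu[of t] by auto
  have "X k + s k * fst (rp t) \<le> X k + s k * 1" "X k + s k * snd (rp t) \<le> X k + s k * 1"
    using r by (simp_all only: Mcmp_le)
  moreover have "0 \<le> s k * fst (rp t)" "0 \<le> s k * snd (rp t)" using r s_pos[of k] by auto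
  ultimately show ?thesis using X_ge0[of k] Xs[of k] by (auto simp: pt_def M_def unit_sq_def mem_Times_iff)
qed

lemma glt: "max (fst q) (snd q) \<le> max (fst p) (snd p) \<Longrightarrow> min (fst q) (snd q) \<le> min (fst p) (snd p) \<Longrightarrow>
   max (fst q) (snd q) < max (fst p) (snd p) \<or> min (fst q) (snd q) < min (fst p) (snd p) \<Longrightarrow>
   p = pt k t \<Longrightarrow> q = pt k' t' \<Longrightarrow> g q < g p"
  using g_key[OF sym incx incy, of p q] pt_unit by blast

lemma g_ord:
  "g (pt k TD) < g (pt k TA)" "g (pt k TO) < g (pt k TA)" "g (pt k TO) < g (pt k TD)"
  "g (pt k TC) < g (pt k TP)" "g (pt k TC) < g (pt k TQ)"
  "g (pt k TP) < g (pt (Suc k) TO)" "g (pt k TQ) < g (pt (Suc k) TO)"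
proof -
  note o = sprod[of k] c0 ca ah hz z1
  show "g (pt k TD) < g (pt k TA)" by (rule glt[OF _ _ _ refl refl]) (use o in \<open>auto simp: p_simps max_def min_def\<close>)
  show "g (pt k TO) < g (pt k TA)" by (rule glt[OF _ _ _ refl refl]) (use o in \<open>auto simp: p_simps max_def min_def\<close>)
  show "g (pt k TO) < g (pt k TD)" by (rule glt[OF _ _ _ refl refl]) (use o in \<open>auto simp: p_simps max_def min_def\<close>)
  show "g (pt k TC) < g (pt k TP)" by (rule glt[OF _ _ _ refl refl]) (use o in \<open>auto simp: p_simps max_def min_def\<close>)
  show "g (pt k TC) < g (pt k TQ)" by (rule glt[OF _ _ _ refl refl]) (use o in \<open>auto simp: p_simps max_def min_def\<close>)
  show "g (pt k TP) < g (pt (Suc k) TO)" by (rule glt[OF _ _ _ refl refl]) (use o in \<open>auto simp: p_simps max_def min_def X_Suc\<close>)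
  show "g (pt k TQ) < g (pt (Suc k) TO)" by (rule glt[OF _ _ _ refl refl]) (use o in \<open>auto simp: p_simps max_def min_def X_Suc\<close>)
qed

lemma greedy_main:
  assumes gr: "greedy_run g S ps rs"
  shows "i < length ps \<Longrightarrow> (k,t) \<in> I \<Longrightarrow> ps ! i = pt k t \<Longrightarrow> rs ! i = gR k t"
proof (induct i arbitrary: k t rule: less_induct)
  case (less i)
  have dist: "distinct ps" and setps: "set ps = S" and len: "length rs = length ps"
    and ordr: "\<forall>i<length ps. \<forall>j<length ps. g (ps ! i) > g (ps ! j) \<longrightarrow> i < j"
    and step: "\<forall>i<length ps. greedy_cand S (set (take i rs)) (ps ! i) (rs ! i)
          \<and> (\<forall>r. greedy_cand S (set (take i rs)) (ps ! i) r \<longrightarrow> rect_area r \<le> rect_area (rs ! i))"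
    using gr by (auto simp: greedy_run_def)
  note il = less.prems(1) and kt = less.prems(2) and pe = less.prems(3)
  define prev where "prev = set (take i rs)"
  have prev_mem: "\<exists>j<i. r' = rs ! j \<and> j < length ps" if "r' \<in> prev" for r'
  proof -
    from that obtain j where "j < length (take i rs)" "take i rs ! j = r'"
      unfolding prev_def by (auto simp: in_set_conv_nth)
    then show ?thesis using len by auto
  qed
  have valid: "greedy_cand S prev (pt k t) (gR k t)"
    unfolding greedy_cand_def
  proof (intro conjI ballI)
    show "anchored_ok S (pt k t) (gR k t)" using kt by (rule gR_anch)
  next
    fix r' assume "r' \<in> prev"
    then obtain j where j: "j < i" "r' = rs ! j" "j < length ps" using prev_mem by blast
    have "ps ! j \<in> S" using j setps by auto
    then obtain k' t' where kt': "(k',t') \<in> I" "ps ! j = pt k' t'" by (rule S_cases)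
    have r'e: "r' = gR k' t'" using less.hyps[OF j(1) j(3) kt'] j by simp
    have "ps ! j \<noteq> ps ! i" using dist j il by (simp add: nth_eq_iff_index_eq)
    then have "(k',t') \<noteq> (k,t)" using kt' pe by auto
    then show "rect_int (gR k t) \<inter> rect_int r' = {}" using gR_disj[OF kt kt'(1)] r'e by auto
  qed
  have st: "greedy_cand S prev (ps ! i) (rs ! i)"
    "\<forall>r. greedy_cand S prev (ps ! i) r \<longrightarrow> rect_area r \<le> rect_area (rs ! i)"
    using step il unfolding prev_def by blast+
  have cand: "greedy_cand S prev (pt k t) (rs ! i)" using st(1) pe by simp
  have "greedy_cand S prev (ps ! i) (gR k t)" using valid pe by simp
  then have ar: "rect_area (gR k t) \<le> rect_area (rs ! i)" using st(2) by blast
  have blk: "gR k' t' \<in> prev" if kt': "(k',t') \<in> I" and gl: "g (pt k t) < g (pt k' t')" for k' t'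
  proof -
    have "pt k' t' \<in> set ps" using setps pt_in_S[OF kt'] by simp
    then obtain j where j: "j < length ps" "ps ! j = pt k' t'" by (auto simp: in_set_conv_nth)
    have "j < i" using ordr j il gl pe by auto
    have "rs ! j = gR k' t'" using less.hyps[OF \<open>j < i\<close> j(1) kt' j(2)] .
    moreover have "rs ! j \<in> prev" unfolding prev_def using \<open>j < i\<close> j(1) len
      by (auto simp: in_set_conv_nth intro!: exI[of _ j])
    ultimately show ?thesis by simp
  qed
  show ?case
  proof (cases "k < n")
    case False
    then have kn: "k = n" "t = TO" using kt by (auto simp: I_def)
    show ?thesis using uniq_Tn[of prev "rs ! i"] cand ar kn by simp
  next
    case True
    have I1: "(k,t') \<in> I" for t' using True by (simp add: I_def)
    have I2: "(Suc k, TO) \<in> I" using True by (auto simp: I_def)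
    show ?thesis
    proof (cases t)
      case TO
      have b1: "gR k TA \<in> prev" by (rule blk[OF I1]) (use g_ord(2) TO in simp)
      have b2: "gR k TD \<in> prev" by (rule blk[OF I1]) (use g_ord(3) TO in simp)
      show ?thesis using uniq_TO[OF True, of prev "rs ! i"] cand ar b1 b2 TO by simp
    next
      case TA then show ?thesis using uniq_TA[OF True, of prev "rs ! i"] cand ar by simp
    next
      case TD
      have b1: "gR k TA \<in> prev" by (rule blk[OF I1]) (use g_ord(1) TD in simp)
      show ?thesis using uniq_TD[OF True, of prev "rs ! i"] cand ar b1 TD by simp
    next
      case TC
      have b1: "gR k TP \<in> prev" by (rule blk[OF I1]) (use g_ord(4) TC in simp)
      have b2: "gR k TQ \<in> prev" by (rule blk[OF I1]) (use g_ord(5) TC in simp)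
      show ?thesis using uniq_TC[OF True, of prev "rs ! i"] cand ar b1 b2 TC by simp
    next
      case TP
      have b1: "gR (Suc k) TO \<in> prev" by (rule blk[OF I2]) (use g_ord(6) TP in simp)
      show ?thesis using uniq_TP[OF True, of prev "rs ! i"] cand ar b1 TP by simp
    next
      case TQ
      have b1: "gR (Suc k) TO \<in> prev" by (rule blk[OF I2]) (use g_ord(7) TQ in simp)
      show ?thesis using uniq_TQ[OF True, of prev "rs ! i"] cand ar b1 TQ by simp
    qed
  qed
qed

lemma greedy_set: "greedy_run g S ps rs \<Longrightarrow> set rs \<subseteq> (\<lambda>(k,t). gR k t) ` I"
proof
  fix r assume gr: "greedy_run g S ps rs" and "r \<in> set rs"
  then obtain i where i: "i < length rs" "r = rs ! i" by (auto simp: in_set_conv_nth)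
  have len: "length rs = length ps" and setps: "set ps = S" using gr by (auto simp: greedy_run_def)
  have "ps ! i \<in> S" using i len setps by auto
  then obtain k t where kt: "(k,t) \<in> I" "ps ! i = pt k t" by (rule S_cases)
  have "r = gR k t" using greedy_main[OF gr, of i k t] i len kt by simp
  then show "r \<in> (\<lambda>(k,t). gR k t) ` I" using kt by force
qed

lemma gR_ord: "(k,t) \<in> I \<Longrightarrow> fst (fst (gR k t)) \<le> fst (snd (gR k t)) \<and> snd (fst (gR k t)) \<le> snd (snd (gR k t))"
  using gR_anch[of k t] by (auto simp: anchored_ok_def gR_def)

lemma greedy_area:
  assumes gr: "greedy_run g S ps rs"
  shows "packing_area (set rs) \<le> (\<Sum>x\<in>I. rect_area (gR (fst x) (snd x)))"
proof -
  let ?f = "\<lambda>r. measure lborel (rect_set r)"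
  let ?G = "(\<lambda>(k,t). gR k t) ` I"
  have fin: "finite ?G" using finite_I by simp
  have "packing_area (set rs) \<le> (\<Sum>r\<in>set rs. ?f r)"
    unfolding packing_area_def by (rule measure_UNION_le) (use rect_set_borel' in auto)
  also have "\<dots> \<le> (\<Sum>r\<in>?G. ?f r)"
    by (rule sum_mono2[OF fin greedy_set[OF gr]]) auto
  also have "\<dots> \<le> (\<Sum>x\<in>I. ?f (gR (fst x) (snd x)))"
    using sum_image_le[OF finite_I, of "?f" "\<lambda>(k,t). gR k t"] by (auto simp: case_prod_beta)
  also have "\<dots> = (\<Sum>x\<in>I. rect_area (gR (fst x) (snd x)))"
    by (rule sum.cong[OF refl]) (use gR_ord in \<open>auto intro!: meas_rect\<close>)
  finally show ?thesis .
qed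

end


context chain begin

lemma I_eq: "I = ({..<n} \<times> UNIV) \<union> {(n,TO)}" by (auto simp: I_def)

lemma level_sum: "k < n \<Longrightarrow> (\<Sum>t\<in>UNIV. rect_area (gR k t)) = s k ^ 2 * (1 - c * (1 - h) - (1 - z) ^ 2)"
  by (simp add: ty_UNIV g_simps rect_area_def X_def) (simp add: algebra_simps power2_eq_square)

lemma last_area: "rect_area (gR n TO) = s n ^ 2"
  by (simp add: g_simps rect_area_def X_def power2_eq_square)

lemma tele: "(\<Sum>k<m. s k ^ 2 * (1 - (1 - z) ^ 2)) + s m ^ 2 = 1"
proof (induct m)
  case 0 then show ?case by (simp add: s_def)
next
  case (Suc m)
  have "s (Suc m) ^ 2 = s m ^ 2 * (1 - z) ^ 2" by (simp add: s_Suc power_mult_distrib)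
  then show ?case using Suc by (simp add: algebra_simps)
qed

lemma total_sum: "(\<Sum>x\<in>I. rect_area (gR (fst x) (snd x))) = 1 - c * (1 - h) * (\<Sum>k<n. s k ^ 2)"
proof -
  have "(\<Sum>x\<in>I. rect_area (gR (fst x) (snd x)))
      = (\<Sum>x\<in>{..<n} \<times> UNIV. rect_area (gR (fst x) (snd x))) + rect_area (gR n TO)"
    unfolding I_eq by (subst sum.union_disjoint) (auto simp: ty_UNIV)
  also have "(\<Sum>x\<in>{..<n} \<times> UNIV. rect_area (gR (fst x) (snd x))) = (\<Sum>k<n. \<Sum>t\<in>UNIV. rect_area (gR k t))"
    by (simp add: sum.cartesian_product case_prod_beta)
  also have "\<dots> = (\<Sum>k<n. s k ^ 2 * (1 - c * (1 - h) - (1 - z) ^ 2))"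
    by (rule sum.cong) (auto simp: level_sum)
  also have "\<dots> = (\<Sum>k<n. s k ^ 2 * (1 - (1 - z) ^ 2) - c * (1 - h) * s k ^ 2)"
    by (rule sum.cong) (auto simp: algebra_simps)
  also have "\<dots> = (\<Sum>k<n. s k ^ 2 * (1 - (1 - z) ^ 2)) - c * (1 - h) * (\<Sum>k<n. s k ^ 2)"
    by (simp add: sum_subtractf sum_distrib_left)
  finally show ?thesis using tele[of n] last_area by simp
qed

lemma Mcmp_eq[simp]: "X k + s k * u = X k + s k * v \<longleftrightarrow> u = v"
  using s_pos[of k] by simp

lemma rp_inj: "rp t = rp t' \<Longrightarrow> t = t'"
  using ord by (cases t; cases t') (auto simp: rp_def)

lemma pt_inj: assumes "(k,t) \<in> I" "(k',t') \<in> I" "pt k t = pt k' t'" shows "k = k' \<and> t = t'"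
proof -
  have neq: False if "k < k'" "pt k t = pt k' t'" for k t k' t'
  proof -
    have "X (Suc k) \<le> X k'" using that by (intro X_mono) simp
    then show False using pt_min[of k t] pt_lev[of k' t'] that(2) by auto
  qed
  have "k = k'" using neq[of k k'] neq[of k' k] assms(3) by (metis linorder_neqE_nat)
  moreover then have "rp t = rp t'" using assms(3) s_pos[of k'] by (simp add: pt_def M_def prod_eq_iff)
  ultimately show ?thesis using rp_inj by blast
qed

lemma o_simps: "k < n \<Longrightarrow> oR k TO = ((X k, X k), (X k + s k * c, X k + s k * a))"
  "k < n \<Longrightarrow> oR k TA = ((X k, X k + s k * a), (X k + s k * c, 1))"
  "k < n \<Longrightarrow> oR k TD = ((X k + s k * c, X k), (1, X k + s k * h))"
  "k < n \<Longrightarrow> oR k TC = ((X k + s k * c, X k + s k * h), (X k + s k * z, X k + s k * z))"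
  "k < n \<Longrightarrow> oR k TP = ((X k + s k * c, X k + s k * z), (X k + s k * z, 1))"
  "k < n \<Longrightarrow> oR k TQ = ((X k + s k * z, X k + s k * h), (1, X k + s k * z))"
  "oR n TO = ((X n, X n), (1, 1))"
  using Xs[of k] Xs[of n] by (simp_all add: oR_def pt_def M_def rp_def oup_def ou_def)

lemma mem_rect_set: "q \<in> rect_set ((x1,y1),(x2,y2)) \<longleftrightarrow> x1 \<le> fst q \<and> fst q \<le> x2 \<and> y1 \<le> snd q \<and> snd q \<le> y2"
  by (cases q) (auto simp: rect_set_def)

lemma cover: assumes "q \<in> unit_sq" shows "\<exists>x\<in>I. q \<in> rect_set (oR (fst x) (snd x))"
proof -
  obtain x y where q: "q = (x,y)" "0 \<le> x" "x \<le> 1" "0 \<le> y" "y \<le> 1" using assms by (cases q) (auto simp: unit_sq_def)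
  define K where "K = {k. k \<le> n \<and> X k \<le> min x y}"
  have finK: "finite K" unfolding K_def by simp
  have "0 \<in> K" using q by (simp add: K_def X_def s_def)
  then have neK: "K \<noteq> {}" by blast
  define k where "k = Max K"
  have kK: "k \<in> K" using finK neK by (simp add: k_def)
  then have kn: "k \<le> n" and Xk: "X k \<le> x" "X k \<le> y" by (auto simp: K_def)
  show ?thesis
  proof (cases "k < n")
    case False
    then have "k = n" using kn by simp
    then have "q \<in> rect_set (oR n TO)" using Xk q by (simp add: o_simps mem_rect_set)
    then show ?thesis by (intro bexI[of _ "(n,TO)"]) (auto simp: I_def)
  next
    case True
    have "\<not> X (Suc k) \<le> min x y"
    proof
      assume "X (Suc k) \<le> min x y"
      then have "Suc k \<in> K" using True by (simp add: K_def)
      then have "Suc k \<le> k" using finK by (simp add: k_def)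
      then show False by simp
    qed
    then have mlt: "x < X k + s k * z \<or> y < X k + s k * z" by (auto simp: X_Suc)
    have In: "(k,t) \<in> I" for t using True by (simp add: I_def)
    note o1 = sprod[of k]
    have "\<exists>t. q \<in> rect_set (oR k t)"
    proof (cases "x \<le> X k + s k * c")
      case xc1: True
      then show ?thesis
      proof (cases "y \<le> X k + s k * a")
        case True then show ?thesis using xc1 Xk q \<open>k < n\<close> by (intro exI[of _ TO]) (simp add: o_simps mem_rect_set)
      next
        case False then show ?thesis using xc1 Xk q \<open>k < n\<close> by (intro exI[of _ TA]) (simp add: o_simps mem_rect_set)
      qed
    next
      case xc: False
      show ?thesis
      proof (cases "y \<le> X k + s k * h")
        case True then show ?thesis using xc Xk q \<open>k < n\<close> by (intro exI[of _ TD]) (simp add: o_simps mem_rect_set)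
      next
        case yh: False
        show ?thesis
        proof (cases "x \<le> X k + s k * z")
          case xz: True
          show ?thesis
          proof (cases "y \<le> X k + s k * z")
            case True then show ?thesis using xc yh xz Xk q \<open>k < n\<close> by (intro exI[of _ TC]) (simp add: o_simps mem_rect_set)
          next
            case False then show ?thesis using xc yh xz Xk q \<open>k < n\<close> by (intro exI[of _ TP]) (simp add: o_simps mem_rect_set)
          qed
        next
          case False
          then have "y < X k + s k * z" using mlt by simp
          then show ?thesis using xc yh False Xk q \<open>k < n\<close> by (intro exI[of _ TQ]) (simp add: o_simps mem_rect_set)
        qed
      qed
    qed
    then obtain t where "q \<in> rect_set (oR k t)" by blast
    then show ?thesis using In[of t] by (intro bexI[of _ "(k,t)"]) auto
  qed
qed

definition fo :: "point \<Rightarrow> nat \<times> ty" where "fo p = (SOME x. x \<in> I \<and> pt (fst x) (snd x) = p)"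
definition fR :: "point \<Rightarrow> rect" where "fR p = oR (fst (fo p)) (snd (fo p))"

lemma fo_pt: assumes "(k,t) \<in> I" shows "fo (pt k t) = (k,t)"
proof -
  have "\<exists>x. x \<in> I \<and> pt (fst x) (snd x) = pt k t" using assms by (intro exI[of _ "(k,t)"]) simp
  then have "fo (pt k t) \<in> I \<and> pt (fst (fo (pt k t))) (snd (fo (pt k t))) = pt k t"
    unfolding fo_def by (rule someI_ex)
  then show ?thesis using pt_inj[of "fst (fo (pt k t))" "snd (fo (pt k t))" k t] assms by (auto simp: prod_eq_iff)
qed

lemma fR_pt: "(k,t) \<in> I \<Longrightarrow> fR (pt k t) = oR k t" by (simp add: fR_def fo_pt)

lemma opt_llarp: "is_llarp S (fR ` S)"
  unfolding is_llarp_def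
proof (intro exI[of _ fR] conjI ballI impI refl)
  fix p assume "p \<in> S"
  then obtain k t where "(k,t) \<in> I" "p = pt k t" by (rule S_cases)
  then show "anchored_ok S p (fR p)" using oR_anch by (simp add: fR_pt)
next
  fix p q assume p: "p \<in> S" and q: "q \<in> S" and ne: "p \<noteq> q"
  obtain k t where kt: "(k,t) \<in> I" "p = pt k t" using p by (rule S_cases)
  obtain k' t' where kt': "(k',t') \<in> I" "q = pt k' t'" using q by (rule S_cases)
  have "(k,t) \<noteq> (k',t')" using ne kt kt' by auto
  then show "rect_int (fR p) \<inter> rect_int (fR q) = {}" using oR_disj[OF kt(1) kt'(1)] kt kt' by (simp add: fR_pt)
qed

lemma opt_union: "\<Union> (rect_set ` fR ` S) = unit_sq"
proof
  show "\<Union> (rect_set ` fR ` S) \<subseteq> unit_sq"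
  proof
    fix q assume "q \<in> \<Union> (rect_set ` fR ` S)"
    then obtain p where p: "p \<in> S" "q \<in> rect_set (fR p)" by auto
    from p(1) obtain k t where kt: "(k,t) \<in> I" "p = pt k t" by (rule S_cases)
    show "q \<in> unit_sq" using oR_anch[OF kt(1)] p(2) kt by (auto simp: anchored_ok_def fR_pt)
  qed
next
  show "unit_sq \<subseteq> \<Union> (rect_set ` fR ` S)"
  proof
    fix q assume "q \<in> unit_sq"
    then obtain x where x: "x \<in> I" "q \<in> rect_set (oR (fst x) (snd x))" using cover by blast
    then have "fR (pt (fst x) (snd x)) = oR (fst x) (snd x)" using fR_pt[of "fst x" "snd x"] by simp
    moreover have "pt (fst x) (snd x) \<in> S" using x pt_in_S[of "fst x" "snd x"] by simp
    ultimately show "q \<in> \<Union> (rect_set ` fR ` S)" using x by force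
  qed
qed

lemma OPT_ge1: "1 \<le> OPT S"
proof -
  have pa: "packing_area (fR ` S) = 1" unfolding packing_area_def opt_union by (rule unit_sq_measure)
  have fm: "unit_sq \<in> fmeasurable lborel"
  proof -
    have e: "unit_sq = cbox (0,0) (1::real,1::real)" by (simp add: unit_sq_def cbox_Pair_eq)
    have "cbox (0,0) (1::real,1::real) \<in> fmeasurable lborel" by (rule fmeasurable_cbox)
    then show ?thesis unfolding e .
  qed
  have bdd: "bdd_above {packing_area R | R. is_llarp S R}"
  proof (rule bdd_aboveI[of _ 1], clarify)
    fix R assume "is_llarp S R"
    then obtain f where f: "R = f ` S" "\<forall>p\<in>S. anchored_ok S p (f p)" by (auto simp: is_llarp_def)
    have sub: "\<Union> (rect_set ` R) \<subseteq> unit_sq" using f by (auto simp: anchored_ok_def)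
    have "finite R" using f finite_S by simp
    then have "\<Union> (rect_set ` R) \<in> sets lborel" by (intro sets.finite_UN) (use rect_set_borel' in auto)
    then have "packing_area R \<le> measure lborel unit_sq"
      unfolding packing_area_def by (rule measure_mono_fmeasurable[OF sub _ fm])
    then show "packing_area R \<le> 1" using unit_sq_measure by simp
  qed
  have "packing_area (fR ` S) \<in> {packing_area R | R. is_llarp S R}" using opt_llarp by blast
  then have "packing_area (fR ` S) \<le> OPT S" unfolding OPT_def by (rule cSup_upper[OF _ bdd])
  then show ?thesis using pa by simp
qed

end


lemma geo: "(\<Sum>k<m. q^k) * (1 - q) = 1 - (q::real)^m"
proof (induct m)
  case 0 show ?case by simp
next
  case (Suc m)
  have "(\<Sum>k<Suc m. q^k) * (1 - q) = (\<Sum>k<m. q^k) * (1 - q) + q^m * (1 - q)" by (simp add: algebra_simps)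
  also have "\<dots> = 1 - q ^ Suc m" using Suc by (simp add: algebra_simps)
  finally show ?case .
qed

theorem theorem9:
  fixes g :: "real \<times> real \<Rightarrow> real"
  assumes sym: "\<forall>x\<in>{0..1}. \<forall>y\<in>{0..1}. g (x, y) = g (y, x)"
    and incx: "\<forall>x\<in>{0..1}. \<forall>x'\<in>{0..1}. \<forall>y\<in>{0..1}. x > x' \<longrightarrow> g (x, y) > g (x', y)"
    and incy: "\<forall>x\<in>{0..1}. \<forall>y\<in>{0..1}. \<forall>y'\<in>{0..1}. y > y' \<longrightarrow> g (x, y) > g (x, y')"
  shows "\<forall>\<epsilon>>0. \<exists>S. finite S \<and> S \<subseteq> unit_sq \<and> (0, 0) \<in> S \<and>
           (\<forall>ps rs. greedy_run g S ps rs \<longrightarrow>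
              packing_area (set rs) / OPT S \<le> 3 / 4 + \<epsilon>)"
proof (intro allI impI)
  fix \<epsilon> :: real assume ep: "\<epsilon> > 0"
  define c where "c = min (1/10) (\<epsilon>/2)"
  have c0: "0 < c" "c \<le> 1/10" "c \<le> \<epsilon>/2" using ep by (auto simp: c_def)
  define a where "a = c + c * c"
  define h where "h = 2 * c"
  define z where "z = 2 * c + c * c"
  have cc: "c * c \<le> c * (1/10)" using c0 by (intro mult_left_mono) auto
  have ccc: "c * c * c \<le> c * c * (1/10)" using c0 by (intro mult_left_mono) auto
  have cpos: "0 < c * c" "0 < c * c * c" using c0 by auto
  have ch: "chain c a h z"
    unfolding chain_def a_def h_def z_def
  proof (intro conjI)
    show "c * (1 - (c + c * c)) < 2 * c - (c + c * c)"
    proof -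
      have "c * (1 - (c + c * c)) = 2 * c - (c + c * c) - c * c * c" by (simp add: algebra_simps)
      then show ?thesis using cpos by linarith
    qed
  qed (use c0 cc cpos in auto)
  define q where "q = (1 - z) ^ 2"
  have z01: "0 < 1 - z" "1 - z < 1" using c0 cc cpos by (auto simp: z_def)
  have q01: "0 \<le> q" "q < 1"
  proof -
    show "0 \<le> q" by (simp add: q_def)
    have "(1 - z) * (1 - z) < 1 * 1" using z01 by (intro mult_strict_mono) auto
    then show "q < 1" by (simp add: q_def power2_eq_square)
  qed
  obtain N where qN: "q ^ N < \<epsilon>" using real_arch_pow_inv[OF ep q01(2)] by blast
  interpret C: chain_g c a h z N g
    using ch sym incx incy by (simp add: chain_g_def chain_g_axioms_def)
  define L where "L = c * (1 - h)"
  define D where "D = 1 - q"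
  have Dpos: "0 < D" using q01 by (simp add: D_def)
  have A: "(1 - 4 * c) * D \<le> 4 * L"
  proof -
    have "4 * L - (1 - 4 * c) * D = c * c * (10 - 4 * c - 15 * (c * c) - 4 * (c * c * c))"
      unfolding L_def D_def q_def h_def z_def by algebra
    moreover have "0 \<le> c * c * (10 - 4 * c - 15 * (c * c) - 4 * (c * c * c))"
      by (intro mult_nonneg_nonneg) (use cc ccc c0 cpos in linarith)+
    ultimately show ?thesis by linarith
  qed
  have B: "2 * L \<le> D"
  proof -
    have "D - 2 * L = 2 * c + 2 * (c * c) - 4 * (c * c * c) - c * (c * c * c)"
      unfolding L_def D_def q_def h_def z_def by algebra
    moreover have "c * (c * c * c) \<le> c * c * c" using c0 cpos by (simp add: mult_le_cancel_right1 less_imp_le)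
    ultimately show ?thesis using cc ccc c0 cpos by linarith
  qed
  define G where "G = (\<Sum>k<N. q ^ k)"
  have GD: "G * D = 1 - q ^ N" unfolding G_def D_def by (rule geo)
  have qN0: "0 \<le> q ^ N" using q01 by simp
  have LG: "1/4 - \<epsilon> \<le> L * G"
  proof -
    have "L * G * D = L * (G * D)" by (simp add: mult.assoc)
    also have "\<dots> = L * (1 - q ^ N)" by (simp only: GD)
    also have "\<dots> = L - L * q ^ N" by (simp add: right_diff_distrib)
    finally have "L * G * D = L - L * q ^ N" .
    moreover have "L * q ^ N \<le> (D / 2) * q ^ N" using B qN0 by (intro mult_right_mono) auto
    moreover have "(D / 2) * q ^ N \<le> (D / 2) * \<epsilon>" using qN Dpos by (intro mult_left_mono) auto
    moreover have "(1/4 - \<epsilon>/2) * D \<le> (1/4 - c) * D" using c0 Dpos by (intro mult_right_mono) auto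
    ultimately have "(1/4 - \<epsilon>) * D \<le> L * G * D" using A by (simp add: algebra_simps)
    then show ?thesis using Dpos by simp
  qed
  show "\<exists>S. finite S \<and> S \<subseteq> unit_sq \<and> (0, 0) \<in> S \<and>
           (\<forall>ps rs. greedy_run g S ps rs \<longrightarrow> packing_area (set rs) / OPT S \<le> 3 / 4 + \<epsilon>)"
  proof (intro exI[of _ C.S] conjI allI impI)
    show "finite C.S" by (rule C.finite_S)
    show "C.S \<subseteq> unit_sq" using C.pt_unit by (auto simp: C.S_def)
    have "(0, TO) \<in> C.I" by (auto simp: C.I_def)
    moreover have "C.pt 0 TO = (0,0)" by (simp add: C.p_simps C.X_def C.s_def)
    ultimately show "(0,0) \<in> C.S" using C.pt_in_S by metis
  next
    fix ps rs assume gr: "greedy_run g C.S ps rs"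
    have sq: "C.s k ^ 2 = q ^ k" for k
      by (simp add: C.s_def q_def flip: power_mult) (simp add: mult.commute)
    have ga: "packing_area (set rs) \<le> 1 - L * G"
      using C.greedy_area[OF gr] C.total_sum by (simp add: sq L_def G_def)
    have opt: "1 \<le> OPT C.S" by (rule C.OPT_ge1)
    have pa0: "0 \<le> packing_area (set rs)" by (simp add: packing_area_def)
    have "packing_area (set rs) / OPT C.S \<le> packing_area (set rs) / 1"
      using opt pa0 by (intro divide_left_mono) auto
    then show "packing_area (set rs) / OPT C.S \<le> 3 / 4 + \<epsilon>" using ga LG by simp
  qed
qed


end
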